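(* Let $\beta<0$, $\kappa>0$ and $K\neq0$ be real constants and let $I=\{r>0:1-Kr>0\}$. Set $\mathcal{A}(\psi)\equiv1$, $\tilde{\mathcal{C}}(\psi)=\sqrt{-\tfrac{2\beta}{3}}\,\psi$, $\mathcal{V}\equiv0$, and $$A(r)=1-Kr,\qquad C(r)=1,\qquad \psi(r)=\sqrt{-\tfrac{6}{\beta}}\,\log(1-Kr).$$ Then $E^{(1)}_{tt}=E^{(1)}_{rr}=E^{(1)}_{\vartheta\vartheta}=E^{(1)}_{\psi}=0$ hold on $I$, i.e. this is a solution of the real-tetrad vacuum field equations with metric ${\rm d}s^2=(1-Kr)^2{\rm d}t^2-(1-Kr)^{-2}{\rm d}r^2-r^2{\rm d}\Omega^2$.
   Context: Metric ansatz ${\rm d}s^2=A(r)^2{\rm d}t^2-\frac{C(r)^2}{A(r)^2}{\rm d}r^2-r^2{\rm d}\Omega^2$, $\psi=\psi(r)$. Primes on $A,C,\psi$ are $r$-derivatives; $\mathcal{A}',\tilde{\mathcal{C}}',\tilde{\mathcal{C}}'',\mathcal{V}'$ are $\psi$-derivatives evaluated at $\psi(r)$. The real-tetrad reduced vacuum field equations of the scalar-torsion theory are: $E^{(1)}_{tt}:\ 0=\mathcal{A}\frac{A^2(-2rACA'-A^2(C-2rC')+C^3)}{r^2C^3}+\tilde{\mathcal{C}}'\Big(\frac{A^4\psi''}{C^2}-\frac{A^3\psi'(-rCA'+rAC'-2C^2)}{rC^3}\Big)-\frac{2A^3(A-C)\psi'\mathcal{A}'}{rC^2}+\frac{A^4\psi'^2\tilde{\mathcal{C}}''}{C^2}-\frac{\beta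 A^4\psi'^2}{2C^2}+\kappa^2A^2\mathcal{V}$; $E^{(1)}_{rr}:\ 0=-\frac{(2rAA'+A^2-C^2)\mathcal{A}}{r^2A^2}+\big(\frac{A'}{A}+\frac2r\big)\psi'\tilde{\mathcal{C}}'+\frac{\kappa^2C^2\mathcal{V}}{A^2}+\frac12\beta\psi'^2$; $E^{(1)}_{\vartheta\vartheta}:\ 0=-\frac{A\psi'(rA'+A-C)\mathcal{A}'}{rC^2}+\tilde{\mathcal{C}}'\Big(\frac{A\psi'(rCA'-rAC'+C^2)}{rC^3}+\frac{A^2\psi''}{C^2}\Big)+\frac{\mathcal{A}(-rCA'^2+A(rA'C'-C(rA''+2A'))+A^2C')}{rC^3}+\frac{A^2\psi'^2\tilde{\mathcal{C}}''}{C^2}-\frac{\beta A^2\psi'^2}{2C^2}+\kappa^2\mathcal{V}$; $E^{(1)}_{\psi}:\ 0=\frac{(A-C)(2rA'+A-C)\mathcal{A}'}{r^2C^2}+\frac{\beta A\psi'(2rCA'+A(2C-rC'))}{rC^3}+\frac{\beta A^2\psi''}{C^2}+\kappa^2\mathcal{V}'+\frac{\tilde{\mathcal{C}}'(rCA'(rA'-2C)+A(-r^2A'C'+rC(rA''+6A')-2C^2)+2A^2(C-rC'))}{r^2C^3}$. *)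

theory Defs
  imports "HOL-Analysis.Analysis"
begin

text \<open>Reduced real-tetrad vacuum field equations of the scalar-torsion theory,
for metric functions A, C, scalar field psi (functions of r) and coupling
functions calA, Ct (= C-tilde), V (functions of psi).
Each definition gives the right-hand side of the equation "0 = ...".\<close>

definition E_tt ::
  "real \<Rightarrow> real \<Rightarrow> (real \<Rightarrow> real) \<Rightarrow> (real \<Rightarrow> real) \<Rightarrow> (real \<Rightarrow> real) \<Rightarrow>
   (real \<Rightarrow> real) \<Rightarrow> (real \<Rightarrow> real) \<Rightarrow> (real \<Rightarrow> real) \<Rightarrow> real \<Rightarrow> real" where
  "E_tt \<beta> \<kappa> calA Ct V A C \<psi> r =
    (let a = A r; a1 = deriv A r; c = C r; c1 = deriv C r;
         p = \<psi> r; p1 = deriv \<psi> r; p2 = deriv (deriv \<psi>) r;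
         F = calA p; F1 = deriv calA p; G1 = deriv Ct p; G2 = deriv (deriv Ct) p; W = V p
     in F * (a^2 * (-2*r*a*c*a1 - a^2*(c - 2*r*c1) + c^3)) / (r^2 * c^3)
        + G1 * (a^4 * p2 / c^2 - a^3 * p1 * (-r*c*a1 + r*a*c1 - 2*c^2) / (r * c^3))
        - 2 * a^3 * (a - c) * p1 * F1 / (r * c^2)
        + a^4 * p1^2 * G2 / c^2
        - \<beta> * a^4 * p1^2 / (2 * c^2)
        + \<kappa>^2 * a^2 * W)"

definition E_rr ::
  "real \<Rightarrow> real \<Rightarrow> (real \<Rightarrow> real) \<Rightarrow> (real \<Rightarrow> real) \<Rightarrow> (real \<Rightarrow> real) \<Rightarrow>
   (real \<Rightarrow> real) \<Rightarrow> (real \<Rightarrow> real) \<Rightarrow> (real \<Rightarrow> real) \<Rightarrow> real \<Rightarrow> real" where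
  "E_rr \<beta> \<kappa> calA Ct V A C \<psi> r =
    (let a = A r; a1 = deriv A r; c = C r;
         p = \<psi> r; p1 = deriv \<psi> r;
         F = calA p; G1 = deriv Ct p; W = V p
     in - ((2*r*a*a1 + a^2 - c^2) * F) / (r^2 * a^2)
        + (a1 / a + 2 / r) * p1 * G1
        + \<kappa>^2 * c^2 * W / a^2
        + 1/2 * \<beta> * p1^2)"

definition E_thth ::
  "real \<Rightarrow> real \<Rightarrow> (real \<Rightarrow> real) \<Rightarrow> (real \<Rightarrow> real) \<Rightarrow> (real \<Rightarrow> real) \<Rightarrow>
   (real \<Rightarrow> real) \<Rightarrow> (real \<Rightarrow> real) \<Rightarrow> (real \<Rightarrow> real) \<Rightarrow> real \<Rightarrow> real" where
  "E_thth \<beta> \<kappa> calA Ct V A C \<psi> r =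
    (let a = A r; a1 = deriv A r; a2 = deriv (deriv A) r; c = C r; c1 = deriv C r;
         p = \<psi> r; p1 = deriv \<psi> r; p2 = deriv (deriv \<psi>) r;
         F = calA p; F1 = deriv calA p; G1 = deriv Ct p; G2 = deriv (deriv Ct) p; W = V p
     in - a * p1 * (r*a1 + a - c) * F1 / (r * c^2)
        + G1 * (a * p1 * (r*c*a1 - r*a*c1 + c^2) / (r * c^3) + a^2 * p2 / c^2)
        + F * (-r*c*a1^2 + a*(r*a1*c1 - c*(r*a2 + 2*a1)) + a^2*c1) / (r * c^3)
        + a^2 * p1^2 * G2 / c^2
        - \<beta> * a^2 * p1^2 / (2 * c^2)
        + \<kappa>^2 * W)"

definition E_psi ::
  "real \<Rightarrow> real \<Rightarrow> (real \<Rightarrow> real) \<Rightarrow> (real \<Rightarrow> real) \<Rightarrow> (real \<Rightarrow> real) \<Rightarrow>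
   (real \<Rightarrow> real) \<Rightarrow> (real \<Rightarrow> real) \<Rightarrow> (real \<Rightarrow> real) \<Rightarrow> real \<Rightarrow> real" where
  "E_psi \<beta> \<kappa> calA Ct V A C \<psi> r =
    (let a = A r; a1 = deriv A r; a2 = deriv (deriv A) r; c = C r; c1 = deriv C r;
         p = \<psi> r; p1 = deriv \<psi> r; p2 = deriv (deriv \<psi>) r;
         F1 = deriv calA p; G1 = deriv Ct p; W1 = deriv V p
     in (a - c) * (2*r*a1 + a - c) * F1 / (r^2 * c^2)
        + \<beta> * a * p1 * (2*r*c*a1 + a*(2*c - r*c1)) / (r * c^3)
        + \<beta> * a^2 * p2 / c^2
        + \<kappa>^2 * W1
        + G1 * (r*c*a1*(r*a1 - 2*c) + a*(- (r^2*a1*c1) + r*c*(r*a2 + 6*a1) - 2*c^2)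
                + 2*a^2*(c - r*c1)) / (r^2 * c^3))"

end

theory Submission
  imports Defs
begin

lemma dpsi:
  fixes s K x :: real
  assumes "0 < 1 - K * x"
  shows "((\<lambda>r. s * ln (1 - K * r)) has_real_derivative (- s * K / (1 - K * x))) (at x)"
  using assms by (auto intro!: derivative_eq_intros simp: field_simps)

lemma dpsi2:
  fixes s K x :: real
  assumes "0 < 1 - K * x"
  shows "((\<lambda>r. - s * K / (1 - K * r)) has_real_derivative (- s * K^2 / (1 - K * x)^2)) (at x)"
  using assms by (auto intro!: derivative_eq_intros simp: field_simps power2_eq_square)

theorem mainTheorem3:
  fixes \<beta> \<kappa> K :: real
  assumes "\<beta> < 0" and "\<kappa> > 0" and "K \<noteq> 0"
  defines "calA \<equiv> (\<lambda>_::real. 1::real)"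
      and "Ct \<equiv> (\<lambda>x::real. sqrt (- 2 * \<beta> / 3) * x)"
      and "V \<equiv> (\<lambda>_::real. 0::real)"
      and "A \<equiv> (\<lambda>r::real. 1 - K * r)"
      and "C \<equiv> (\<lambda>_::real. 1::real)"
      and "\<psi> \<equiv> (\<lambda>r::real. sqrt (- 6 / \<beta>) * ln (1 - K * r))"
  shows "\<forall>r \<in> {r. 0 < r \<and> 0 < 1 - K * r}.
           E_tt \<beta> \<kappa> calA Ct V A C \<psi> r = 0 \<and>
           E_rr \<beta> \<kappa> calA Ct V A C \<psi> r = 0 \<and>
           E_thth \<beta> \<kappa> calA Ct V A C \<psi> r = 0 \<and>
           E_psi \<beta> \<kappa> calA Ct V A C \<psi> r = 0"
proof
  fix r assume "r \<in> {r. 0 < r \<and> 0 < 1 - K * r}"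
  then have r0: "0 < r" and a0: "0 < 1 - K * r" by auto
  define s where "s = sqrt (- 6 / \<beta>)"
  define g where "g = sqrt (- 2 * \<beta> / 3)"
  have s0: "s > 0" using assms(1) by (simp add: s_def divide_neg_neg)
  have ss: "s^2 = - 6 / \<beta>" using assms(1) by (simp add: s_def divide_neg_neg less_imp_le)
  have sg: "s * g = 2"
  proof -
    have "s * g = sqrt ((- 6 / \<beta>) * (- 2 * \<beta> / 3))" unfolding s_def g_def by (rule real_sqrt_mult[symmetric])
    also have "(- 6 / \<beta>) * (- 2 * \<beta> / 3) = 4" using assms(1) by (simp add: field_simps)
    finally show ?thesis by simp
  qed
  have gs: "g = 2 / s" using sg s0 by (simp add: field_simps)
  have bs: "\<beta> = - 6 / s^2" using ss assms(1) s0 by (simp add: field_simps)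
  have dA: "deriv A = (\<lambda>_. - K)" unfolding A_def
    by (rule ext, rule DERIV_imp_deriv, auto intro!: derivative_eq_intros)
  have dC: "deriv C = (\<lambda>_. 0)" unfolding C_def by (rule ext) simp
  have dcalA: "deriv calA = (\<lambda>_. 0)" unfolding calA_def by (rule ext) simp
  have dV: "deriv V = (\<lambda>_. 0)" unfolding V_def by (rule ext) simp
  have dCt: "deriv Ct = (\<lambda>_. g)" unfolding Ct_def g_def
    by (rule ext, rule DERIV_imp_deriv, auto intro!: derivative_eq_intros)
  have ddA: "deriv (deriv A) r = 0" by (simp add: dA)
  have ddCt: "deriv (deriv Ct) x = 0" for x by (simp add: dCt)
  have dpsiS: "\<And>x. x \<in> {x. 0 < 1 - K * x} \<Longrightarrow> deriv \<psi> x = - s * K / (1 - K * x)"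
    unfolding \<psi>_def s_def[symmetric] by (rule DERIV_imp_deriv, rule dpsi) auto
  have dp: "deriv \<psi> r = - s * K / (1 - K * r)" using dpsiS a0 by auto
  have "(deriv \<psi> has_real_derivative (- s * K^2 / (1 - K * r)^2)) (at r)"
  proof (rule has_field_derivative_transform_within_open[OF dpsi2[OF a0]])
    show "open {x. 0 < 1 - K * x}" by (auto intro!: open_Collect_less continuous_intros)
    show "r \<in> {x. 0 < 1 - K * x}" using a0 by simp
    show "\<And>x. x \<in> {x. 0 < 1 - K * x} \<Longrightarrow> - s * K / (1 - K * x) = deriv \<psi> x"
      using dpsiS by simp
  qed
  then have ddp: "deriv (deriv \<psi>) r = - s * K^2 / (1 - K * r)^2" by (rule DERIV_imp_deriv)
  have ne: "1 - K * r \<noteq> 0" using a0 by simp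
  define a where "a = 1 - K * r"
  have an: "a \<noteq> 0" using ne a_def by simp
  have Ka: "K = (1 - a) / r" using r0 a_def by (simp add: field_simps)
  have Ar: "A r = a" by (simp add: A_def a_def)
  note base = dA dC dcalA dV dCt ddA ddCt dp ddp gs bs Ar a_def[symmetric]
  have rn: "r \<noteq> 0" using r0 by simp
  have sn: "s \<noteq> 0" using s0 by simp
  have e1: "E_tt \<beta> \<kappa> calA Ct V A C \<psi> r = 0"
    unfolding E_tt_def Let_def
    apply (simp add: base calA_def V_def C_def)
    apply (simp add: Ka)
    using an rn sn by (simp add: field_simps; algebra)
  have e2: "E_rr \<beta> \<kappa> calA Ct V A C \<psi> r = 0"
    unfolding E_rr_def Let_def
    apply (simp add: base calA_def V_def C_def)
    apply (simp add: Ka)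
    using an rn sn by (simp add: field_simps; algebra)
  have e3: "E_thth \<beta> \<kappa> calA Ct V A C \<psi> r = 0"
    unfolding E_thth_def Let_def
    apply (simp add: base calA_def V_def C_def)
    apply (simp add: Ka)
    using an rn sn by (simp add: field_simps; algebra)
  have e4: "E_psi \<beta> \<kappa> calA Ct V A C \<psi> r = 0"
    unfolding E_psi_def Let_def
    apply (simp add: base calA_def V_def C_def)
    apply (simp add: Ka)
    using an rn sn by (simp add: field_simps; algebra)
  show "E_tt \<beta> \<kappa> calA Ct V A C \<psi> r = 0 \<and>
           E_rr \<beta> \<kappa> calA Ct V A C \<psi> r = 0 \<and>
           E_thth \<beta> \<kappa> calA Ct V A C \<psi> r = 0 \<and>
           E_psi \<beta> \<kappa> calA Ct V A C \<psi> r = 0"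
    using e1 e2 e3 e4 by simp
qed

end
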